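(* Let $W\in L^1(\mathbb{R}^3)\cap L^p(\mathbb{R}^3)$, for some $p>3$, be a probability density, and for each $N$ let $y_1,\dots,y_N$ be independent identically distributed random points in $\mathbb{R}^3$ with density $W$, with joint law $P_N=\{W(x)dx\}^{\otimes N}$. Let $\nu^*(p)=\frac13\frac{p-3}{p-1}\in(0,1/3)$. Then the set of configurations $Y_N=\{y_1,\dots,y_N\}$ on which conditions (Y1) and (Y2) hold has $P_N$-probability tending to one as $N\to\infty$. More precisely: for every $0<\nu<\nu^*(p)$ and every $C>0$, $$\lim_{N\to\infty}P_N\Big(\min_{i\ne j}|y_i-y_j|\ge \frac{C}{N^{1-\nu}}\Big)=1,$$ and for every $0<\xi\le1$ there exists $C_\xi<\infty$ such that $$\lim_{N\to\infty}P_N\Big(\frac1{N^2}\sum_{i\neq j}\frac{1}{|y_i-y_j|^{3-\xi}}\le C_\xi\Big)=1.$$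
   Context: Condition (Y1): for any $0<\nu<\nu^*(p)$ there is $C$ with $\min_{i\neq j}|y_i-y_j|\ge C N^{-(1-\nu)}$. Condition (Y2): for any $0<\xi\le 1$ there is $C_\xi<\infty$, independent of $N$, with $N^{-2}\sum_{i\ne j}|y_i-y_j|^{-(3-\xi)}\le C_\xi$. *)

theory Defs
  imports "HOL-Probability.Probability"
begin

definition nu_star :: "real \<Rightarrow> real" where
  "nu_star p = (1/3) * ((p - 3) / (p - 1))"

definition iid_law :: "(real^3 \<Rightarrow> real) \<Rightarrow> nat \<Rightarrow> (nat \<Rightarrow> real^3) measure" where
  "iid_law W N = PiM {..<N} (\<lambda>_. density lborel (\<lambda>x. ennreal (W x)))"

end

theory Submission
  imports Defs
begin


lemma comp_meas: "i \<in> I \<Longrightarrow> (\<lambda>x. x i) \<in> measurable (PiM I (\<lambda>_. M)) M"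
  using measurable_component_singleton[of i I "\<lambda>_. M"] by auto



lemma comp_distr: "prob_space M \<Longrightarrow> i \<in> I \<Longrightarrow> distr (PiM I (\<lambda>_. M)) M (\<lambda>x. x i) = M"
  using distr_PiM_component[of I "\<lambda>_. M" i] by simp

lemma comp_indep:
  fixes M :: "'a measure" and I :: "'i set"
  assumes M: "prob_space M" and I: "I \<noteq> {}"
  shows "prob_space.indep_vars (PiM I (\<lambda>_. M)) (\<lambda>_. M) (\<lambda>i \<omega>. \<omega> i) I"
proof -
  interpret Q: prob_space "PiM I (\<lambda>_. M)" by (rule prob_space_PiM) (rule M)
  show ?thesis
  proof (subst Q.indep_vars_iff_distr_eq_PiM'[OF I])
    show "\<And>i. i \<in> I \<Longrightarrow> (\<lambda>\<omega>. \<omega> i) \<in> measurable (PiM I (\<lambda>_. M)) M" by (rule comp_meas)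
    have "distr (PiM I (\<lambda>_. M)) (PiM I (\<lambda>_. M)) (\<lambda>x. \<lambda>i\<in>I. x i) = distr (PiM I (\<lambda>_. M)) (PiM I (\<lambda>_. M)) (\<lambda>x. x)"
      by (rule distr_cong) (auto simp: space_PiM)
    also have "\<dots> = PiM I (\<lambda>_. M)" by simp
    also have "\<dots> = PiM I (\<lambda>i. distr (PiM I (\<lambda>_. M)) M (\<lambda>x. x i))"
      by (rule PiM_cong) (auto simp: comp_distr M)
    finally show "distr (PiM I (\<lambda>_. M)) (PiM I (\<lambda>_. M)) (\<lambda>x. \<lambda>i\<in>I. x i) = PiM I (\<lambda>i. distr (PiM I (\<lambda>_. M)) M (\<lambda>x. x i))" .
  qed
qed

lemma pair_distr:
  fixes M :: "'a measure" and I :: "'i set"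
  assumes M: "prob_space M" and ij: "i \<in> I" "j \<in> I" "i \<noteq> j"
  shows "distr (PiM I (\<lambda>_. M)) (M \<Otimes>\<^sub>M M) (\<lambda>\<omega>. (\<omega> i, \<omega> j)) = M \<Otimes>\<^sub>M M"
proof -
  interpret Q: prob_space "PiM I (\<lambda>_. M)" by (rule prob_space_PiM) (rule M)
  have "Q.indep_var (PiM {i} (\<lambda>_. M)) (\<lambda>\<omega>. restrict (\<lambda>k. \<omega> k) {i}) (PiM {j} (\<lambda>_. M)) (\<lambda>\<omega>. restrict (\<lambda>k. \<omega> k) {j})"
    by (rule Q.indep_var_restrict[OF comp_indep[OF M]]) (use ij in auto)
  then have "Q.indep_var M ((\<lambda>f. f i) \<circ> (\<lambda>\<omega>. restrict (\<lambda>k. \<omega> k) {i})) M ((\<lambda>f. f j) \<circ> (\<lambda>\<omega>. restrict (\<lambda>k. \<omega> k) {j}))"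
    by (rule Q.indep_var_compose) (auto intro: comp_meas)
  then have ind: "Q.indep_var M (\<lambda>\<omega>. \<omega> i) M (\<lambda>\<omega>. \<omega> j)"
    by (simp add: comp_def)
  have "distr (PiM I (\<lambda>_. M)) M (\<lambda>\<omega>. \<omega> i) \<Otimes>\<^sub>M distr (PiM I (\<lambda>_. M)) M (\<lambda>\<omega>. \<omega> j) = distr (PiM I (\<lambda>_. M)) (M \<Otimes>\<^sub>M M) (\<lambda>x. (x i, x j))"
    using Q.indep_var_distribution_eq ind by blast
  moreover have "distr (PiM I (\<lambda>_. M)) M (\<lambda>\<omega>. \<omega> i) = M" "distr (PiM I (\<lambda>_. M)) M (\<lambda>\<omega>. \<omega> j) = M"
    using comp_distr[OF M ij(1)] comp_distr[OF M ij(2)] by auto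
  ultimately show ?thesis by simp
qed

lemma quad_indep:
  fixes M :: "'a measure" and I :: "'i set"
  assumes M: "prob_space M" and ij: "i \<in> I" "j \<in> I" "k \<in> I" "l \<in> I" "{i,j} \<inter> {k,l} = {}"
    and F: "F \<in> borel_measurable (M \<Otimes>\<^sub>M M)" and G: "G \<in> borel_measurable (M \<Otimes>\<^sub>M M)"
  shows "prob_space.indep_var (PiM I (\<lambda>_. M)) borel (\<lambda>\<omega>. F (\<omega> i, \<omega> j)) borel (\<lambda>\<omega>. G (\<omega> k, \<omega> l))"
proof -
  interpret Q: prob_space "PiM I (\<lambda>_. M)" by (rule prob_space_PiM) (rule M)
  have "Q.indep_var (PiM {i,j} (\<lambda>_. M)) (\<lambda>\<omega>. restrict (\<lambda>t. \<omega> t) {i,j}) (PiM {k,l} (\<lambda>_. M)) (\<lambda>\<omega>. restrict (\<lambda>t. \<omega> t) {k,l})"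
    by (rule Q.indep_var_restrict[OF comp_indep[OF M]]) (use ij in auto)
  moreover have "(\<lambda>f. F (f i, f j)) \<in> borel_measurable (PiM {i,j} (\<lambda>_. M))"
    by (rule measurable_compose[OF _ F], rule measurable_Pair) (auto intro: comp_meas)
  moreover have "(\<lambda>f. G (f k, f l)) \<in> borel_measurable (PiM {k,l} (\<lambda>_. M))"
    by (rule measurable_compose[OF _ G], rule measurable_Pair) (auto intro: comp_meas)
  ultimately have "Q.indep_var borel ((\<lambda>f. F (f i, f j)) \<circ> (\<lambda>\<omega>. restrict (\<lambda>t. \<omega> t) {i,j})) borel ((\<lambda>f. G (f k, f l)) \<circ> (\<lambda>\<omega>. restrict (\<lambda>t. \<omega> t) {k,l}))"
    by (rule Q.indep_var_compose)
  then show ?thesis by (simp add: comp_def)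
qed

context
  fixes M :: "'a measure"
  assumes M: "prob_space M"
begin

lemma Xp_meas: "i \<in> I \<Longrightarrow> j \<in> I \<Longrightarrow> (\<lambda>\<omega>. (\<omega> i, \<omega> j)) \<in> measurable (PiM I (\<lambda>_. M)) (M \<Otimes>\<^sub>M M)"
  by (intro measurable_Pair comp_meas)

lemma hX_meas: "f \<in> borel_measurable (M \<Otimes>\<^sub>M M) \<Longrightarrow> i \<in> I \<Longrightarrow> j \<in> I \<Longrightarrow> (\<lambda>\<omega>. f (\<omega> i, \<omega> j)) \<in> borel_measurable (PiM I (\<lambda>_. M))"
  by (rule measurable_compose[OF Xp_meas])

lemma pair_int:
  fixes f :: "'a \<times> 'a \<Rightarrow> real"
  assumes ij: "i \<in> I" "j \<in> I" "i \<noteq> j" and f: "integrable (M \<Otimes>\<^sub>M M) f"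
  shows "integrable (PiM I (\<lambda>_. M)) (\<lambda>\<omega>. f (\<omega> i, \<omega> j))"
    and "(\<integral>\<omega>. f (\<omega> i, \<omega> j) \<partial>PiM I (\<lambda>_. M)) = (\<integral>z. f z \<partial>(M \<Otimes>\<^sub>M M))"
proof -
  have d: "distr (PiM I (\<lambda>_. M)) (M \<Otimes>\<^sub>M M) (\<lambda>\<omega>. (\<omega> i, \<omega> j)) = M \<Otimes>\<^sub>M M"
    by (rule pair_distr[OF M ij])
  have fm: "f \<in> borel_measurable (M \<Otimes>\<^sub>M M)" using f by (rule borel_measurable_integrable)
  have "integrable (distr (PiM I (\<lambda>_. M)) (M \<Otimes>\<^sub>M M) (\<lambda>\<omega>. (\<omega> i, \<omega> j))) f" using d f by simp
  then show "integrable (PiM I (\<lambda>_. M)) (\<lambda>\<omega>. f (\<omega> i, \<omega> j))"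
    using integrable_distr_eq[OF Xp_meas[OF ij(1,2)] fm] by simp
  show "(\<integral>\<omega>. f (\<omega> i, \<omega> j) \<partial>PiM I (\<lambda>_. M)) = (\<integral>z. f z \<partial>(M \<Otimes>\<^sub>M M))"
    using integral_distr[OF Xp_meas[OF ij(1,2)] fm] d by simp
qed

lemma pair_measure:
  assumes ij: "i \<in> I" "j \<in> I" "i \<noteq> j" and A: "A \<in> sets (M \<Otimes>\<^sub>M M)"
  shows "measure (PiM I (\<lambda>_. M)) {\<omega> \<in> space (PiM I (\<lambda>_. M)). (\<omega> i, \<omega> j) \<in> A} = measure (M \<Otimes>\<^sub>M M) A"
proof -
  have d: "distr (PiM I (\<lambda>_. M)) (M \<Otimes>\<^sub>M M) (\<lambda>\<omega>. (\<omega> i, \<omega> j)) = M \<Otimes>\<^sub>M M"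
    by (rule pair_distr[OF M ij])
  have "measure (distr (PiM I (\<lambda>_. M)) (M \<Otimes>\<^sub>M M) (\<lambda>\<omega>. (\<omega> i, \<omega> j))) A
     = measure (PiM I (\<lambda>_. M)) ((\<lambda>\<omega>. (\<omega> i, \<omega> j)) -` A \<inter> space (PiM I (\<lambda>_. M)))"
    by (rule measure_distr[OF Xp_meas[OF ij(1,2)]]) (use A in simp)
  moreover have "(\<lambda>\<omega>. (\<omega> i, \<omega> j)) -` A \<inter> space (PiM I (\<lambda>_. M)) = {\<omega> \<in> space (PiM I (\<lambda>_. M)). (\<omega> i, \<omega> j) \<in> A}"
    by auto
  ultimately show ?thesis using d by simp
qed

lemma test_meas:
  assumes hm: "h \<in> borel_measurable (M \<Otimes>\<^sub>M M)"
  shows "{y \<in> space (PiM {..<N} (\<lambda>_. M)). (1/(real N)\<^sup>2) * (\<Sum>i<N. \<Sum>j\<in>{..<N} - {i}. h (y i, y j)) \<le> c} \<in> sets (PiM {..<N} (\<lambda>_. M))"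
  using hm by measurable

lemma ustat_bound:
  fixes h :: "'a \<times> 'a \<Rightarrow> real" and N :: nat and T :: real
  assumes hm: "h \<in> borel_measurable (M \<Otimes>\<^sub>M M)" and hpos: "\<And>z. 0 \<le> h z"
    and hint: "integrable (M \<Otimes>\<^sub>M M) h" and N: "N \<ge> 1" and T: "T > 0"
  shows "measure (PiM {..<N} (\<lambda>_. M)) {y \<in> space (PiM {..<N} (\<lambda>_. M)).
           (1/(real N)\<^sup>2) * (\<Sum>i<N. \<Sum>j\<in>{..<N} - {i}. h (y i, y j)) \<le> (\<integral>z. h z \<partial>(M \<Otimes>\<^sub>M M)) + 2}
       \<ge> 1 - ((\<integral>z. h z - min (h z) T \<partial>(M \<Otimes>\<^sub>M M)) + 8 * T * (\<integral>z. h z \<partial>(M \<Otimes>\<^sub>M M)) / real N)"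
proof -
  interpret MM: prob_space "M \<Otimes>\<^sub>M M" by (rule prob_space_pair[OF M M])
  interpret PN: prob_space "PiM {..<N} (\<lambda>_. M)" by (rule prob_space_PiM) (rule M)
  let ?PN = "PiM {..<N} (\<lambda>_. M)"
  define P where "P = Sigma {..<N} (\<lambda>i. {..<N} - {i})"
  have finP: "finite P" unfolding P_def by auto
  have Pprop: "fst p \<in> {..<N} \<and> snd p \<in> {..<N} \<and> fst p \<noteq> snd p" if "p \<in> P" for p
    using that unfolding P_def by auto
  have "card P \<le> card ({..<N} \<times> {..<N})"
    by (rule card_mono) (auto simp: P_def)
  then have cardP: "real (card P) \<le> (real N)\<^sup>2"
    by (simp add: card_cartesian_product power2_eq_square flip: of_nat_mult)
  define \<mu> where "\<mu> = (\<integral>z. h z \<partial>(M \<Otimes>\<^sub>M M))"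
  define g where "g z = min (h z) T" for z
  define b where "b z = h z - min (h z) T" for z
  define \<mu>T where "\<mu>T = (\<integral>z. g z \<partial>(M \<Otimes>\<^sub>M M))"
  define \<beta> where "\<beta> = (\<integral>z. b z \<partial>(M \<Otimes>\<^sub>M M))"
  have gm[measurable]: "g \<in> borel_measurable (M \<Otimes>\<^sub>M M)" unfolding g_def using hm by measurable
  have bm[measurable]: "b \<in> borel_measurable (M \<Otimes>\<^sub>M M)" unfolding b_def using hm by measurable
  have g_bnd: "0 \<le> g z" "g z \<le> T" "g z \<le> h z" for z using hpos[of z] T by (auto simp: g_def)
  have b_bnd: "0 \<le> b z" "b z \<le> h z" for z using hpos[of z] T by (auto simp: b_def)
  have gint: "integrable (M \<Otimes>\<^sub>M M) g"
    by (rule Bochner_Integration.integrable_bound[OF hint gm]) (use g_bnd hpos in auto)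
  have bint: "integrable (M \<Otimes>\<^sub>M M) b"
    by (rule Bochner_Integration.integrable_bound[OF hint bm]) (use b_bnd hpos in auto)
  have \<mu>_split: "\<mu> = \<mu>T + \<beta>"
  proof -
    have "(\<lambda>z. h z) = (\<lambda>z. g z + b z)" by (auto simp: g_def b_def)
    then show ?thesis unfolding \<mu>_def \<mu>T_def \<beta>_def using gint bint by simp
  qed
  have \<mu>T_ge: "0 \<le> \<mu>T" unfolding \<mu>T_def by (rule Bochner_Integration.integral_nonneg) (use g_bnd in auto)
  have \<beta>_ge: "0 \<le> \<beta>" unfolding \<beta>_def by (rule Bochner_Integration.integral_nonneg) (use b_bnd in auto)
  have \<mu>T_le: "\<mu>T \<le> \<mu>" using \<mu>_split \<beta>_ge by simp
  have \<mu>T_leT: "\<mu>T \<le> T"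
  proof -
    have "\<mu>T \<le> (\<integral>z. T \<partial>(M \<Otimes>\<^sub>M M))" unfolding \<mu>T_def
      by (rule Bochner_Integration.integral_mono[OF gint]) (use g_bnd in auto)
    then show ?thesis by (simp add: MM.prob_space)
  qed
  have \<mu>_ge: "0 \<le> \<mu>" using \<mu>T_ge \<mu>T_le by simp
  define X where "X p y = (y (fst p), y (snd p))" for p :: "nat \<times> nat" and y :: "nat \<Rightarrow> 'a"
  have Xint: "integrable ?PN (\<lambda>y. f (X p y))" "(\<integral>y. f (X p y) \<partial>?PN) = (\<integral>z. f z \<partial>(M \<Otimes>\<^sub>M M))"
    if "p \<in> P" "integrable (M \<Otimes>\<^sub>M M) f" for p and f :: "'a \<times> 'a \<Rightarrow> real"
    using pair_int[of "fst p" "{..<N}" "snd p" f] Pprop[OF that(1)] that(2) unfolding X_def by auto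
  have Xm: "(\<lambda>y. f (X p y)) \<in> borel_measurable ?PN"
    if "p \<in> P" "f \<in> borel_measurable (M \<Otimes>\<^sub>M M)" for p and f :: "'a \<times> 'a \<Rightarrow> real"
    using hX_meas[of f "fst p" "{..<N}" "snd p"] Pprop[OF that(1)] that(2) unfolding X_def by auto
  define Sb where "Sb y = (\<Sum>p\<in>P. b (X p y))" for y
  define d where "d p y = g (X p y) - \<mu>T" for p y
  define D where "D y = (\<Sum>p\<in>P. d p y)" for y
  have Sbm[measurable]: "Sb \<in> borel_measurable ?PN" unfolding Sb_def
    by (rule borel_measurable_sum) (rule Xm[OF _ bm])
  have dm: "d p \<in> borel_measurable ?PN" if "p \<in> P" for p unfolding d_def
    using Xm[OF that gm] by measurable
  have Dm[measurable]: "D \<in> borel_measurable ?PN" unfolding D_def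
    by (rule borel_measurable_sum) (rule dm)
  have d_bnd: "\<bar>d p y\<bar> \<le> T" for p y
    using g_bnd[of "X p y"] \<mu>T_ge \<mu>T_leT unfolding d_def by auto
  have sum_eq: "(\<Sum>i<N. \<Sum>j\<in>{..<N} - {i}. h (y i, y j)) = (\<Sum>p\<in>P. h (X p y))" for y
    unfolding P_def X_def by (subst sum.Sigma) (auto simp: case_prod_beta)
  have hsplit: "(\<Sum>p\<in>P. h (X p y)) = D y + real (card P) * \<mu>T + Sb y" for y
  proof -
    have "(\<Sum>p\<in>P. h (X p y)) = (\<Sum>p\<in>P. d p y + \<mu>T + b (X p y))"
      by (rule sum.cong) (auto simp: d_def g_def b_def)
    also have "\<dots> = D y + real (card P) * \<mu>T + Sb y"
      by (simp add: sum.distrib D_def Sb_def)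
    finally show ?thesis .
  qed
  have Npos: "real N > 0" using N by simp
  define E where "E = {y \<in> space ?PN. (1/(real N)\<^sup>2) * (\<Sum>i<N. \<Sum>j\<in>{..<N} - {i}. h (y i, y j)) \<le> \<mu> + 2}"
  define A1 where "A1 = {y \<in> space ?PN. (real N)\<^sup>2 \<le> Sb y}"
  define A2 where "A2 = {y \<in> space ?PN. ((real N)\<^sup>2)\<^sup>2 \<le> (D y)\<^sup>2}"
  have Em: "E \<in> sets ?PN" unfolding E_def using hm by measurable
  have A1m: "A1 \<in> sets ?PN" unfolding A1_def by measurable
  have A2m: "A2 \<in> sets ?PN" unfolding A2_def by measurable
  have sub: "space ?PN - E \<subseteq> A1 \<union> A2"
  proof
    fix y assume y: "y \<in> space ?PN - E"
    then have "\<not> (1/(real N)\<^sup>2) * (\<Sum>p\<in>P. h (X p y)) \<le> \<mu> + 2"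
      unfolding E_def sum_eq by auto
    then have big: "(\<Sum>p\<in>P. h (X p y)) > (\<mu> + 2) * (real N)\<^sup>2"
      using Npos by (simp add: field_simps)
    show "y \<in> A1 \<union> A2"
    proof (cases "(real N)\<^sup>2 \<le> Sb y")
      case True then show ?thesis using y unfolding A1_def by auto
    next
      case False
      have "real (card P) * \<mu>T \<le> (real N)\<^sup>2 * \<mu>"
        using cardP \<mu>T_le \<mu>T_ge by (intro mult_mono) auto
      then have "D y > (real N)\<^sup>2" using big False hsplit[of y] by (simp add: algebra_simps)
      then have "((real N)\<^sup>2)\<^sup>2 \<le> (D y)\<^sup>2"
        by (intro power_mono) auto
      then show ?thesis using y unfolding A2_def by auto
    qed
  qed
  have Sbint: "integrable ?PN Sb" unfolding Sb_def
    by (rule Bochner_Integration.integrable_sum) (rule Xint(1)[OF _ bint])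
  have intSb: "(\<integral>y. Sb y \<partial>?PN) = real (card P) * \<beta>"
  proof -
    have "(\<integral>y. Sb y \<partial>?PN) = (\<Sum>p\<in>P. (\<integral>y. b (X p y) \<partial>?PN))"
      unfolding Sb_def by (rule Bochner_Integration.integral_sum) (rule Xint(1)[OF _ bint])
    also have "\<dots> = (\<Sum>p\<in>P. \<beta>)"
      by (rule sum.cong) (auto simp: Xint(2)[OF _ bint] \<beta>_def)
    finally show ?thesis by simp
  qed
  have mA1: "measure ?PN A1 \<le> \<beta>"
  proof -
    have "measure ?PN A1 \<le> (\<integral>y. Sb y \<partial>?PN) / (real N)\<^sup>2"
      unfolding A1_def
      by (rule integral_Markov_inequality_measure[OF Sbint, where A="space ?PN"])
         (auto simp: Sb_def b_bnd intro!: sum_nonneg AE_I2, use N in simp)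
    also have "\<dots> \<le> \<beta>"
    proof -
      have "real (card P) * \<beta> \<le> (real N)\<^sup>2 * \<beta>" using cardP \<beta>_ge by (rule mult_right_mono)
      then show ?thesis using Npos by (simp add: intSb divide_le_eq mult.commute)
    qed
    finally show ?thesis .
  qed
  have ddint: "integrable ?PN (\<lambda>y. d p y * d q y)" if "p \<in> P" "q \<in> P" for p q
  proof (rule PN.integrable_const_bound[where B="T * T"])
    show "AE y in ?PN. norm (d p y * d q y) \<le> T * T"
      using d_bnd[of p] d_bnd[of q] T by (intro AE_I2) (auto intro!: mult_mono simp: abs_mult)
    show "(\<lambda>y. d p y * d q y) \<in> borel_measurable ?PN"
      using dm[OF that(1)] dm[OF that(2)] by measurable
  qed
  have dint: "(\<integral>y. d p y \<partial>?PN) = 0" "integrable ?PN (d p)" if "p \<in> P" for p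
  proof -
    have i1: "integrable (M \<Otimes>\<^sub>M M) (\<lambda>z. g z - \<mu>T)" using gint by simp
    have "(\<integral>y. d p y \<partial>?PN) = (\<integral>z. g z - \<mu>T \<partial>(M \<Otimes>\<^sub>M M))"
      unfolding d_def using Xint(2)[OF that i1] by simp
    also have "\<dots> = 0" using gint by (simp add: \<mu>T_def MM.prob_space)
    finally show "(\<integral>y. d p y \<partial>?PN) = 0" .
    show "integrable ?PN (d p)" unfolding d_def using Xint(1)[OF that i1] by simp
  qed
  have dd_disj: "(\<integral>y. d p y * d q y \<partial>?PN) = 0"
    if pq: "p \<in> P" "q \<in> P" "{fst p, snd p} \<inter> {fst q, snd q} = {}" for p q
  proof -
    have gm2: "(\<lambda>z. g z - \<mu>T) \<in> borel_measurable (M \<Otimes>\<^sub>M M)" by measurable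
    have "PN.indep_var borel (\<lambda>\<omega>. g (\<omega> (fst p), \<omega> (snd p)) - \<mu>T) borel (\<lambda>\<omega>. g (\<omega> (fst q), \<omega> (snd q)) - \<mu>T)"
      using quad_indep[OF M, of "fst p" "{..<N}" "snd p" "fst q" "snd q" "\<lambda>z. g z - \<mu>T" "\<lambda>z. g z - \<mu>T"]
        Pprop[OF pq(1)] Pprop[OF pq(2)] pq(3) gm2 by auto
    then have "PN.indep_var borel (d p) borel (d q)" unfolding d_def X_def by simp
    then have "(\<integral>y. d p y * d q y \<partial>?PN) = (\<integral>y. d p y \<partial>?PN) * (\<integral>y. d q y \<partial>?PN)"
      using PN.indep_var_lebesgue_integral dint(2)[OF pq(1)] dint(2)[OF pq(2)] by blast
    then show ?thesis using dint(1)[OF pq(1)] by simp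
  qed
  have dd_ov: "(\<integral>y. d p y * d q y \<partial>?PN) \<le> 2 * T * \<mu>" if pq: "p \<in> P" "q \<in> P" for p q
  proof -
    have i1: "integrable (M \<Otimes>\<^sub>M M) (\<lambda>z. T * (g z + \<mu>T))" using gint by simp
    have "(\<integral>y. d p y * d q y \<partial>?PN) \<le> (\<integral>y. T * (g (X q y) + \<mu>T) \<partial>?PN)"
    proof (rule Bochner_Integration.integral_mono[OF ddint[OF pq] Xint(1)[OF pq(2) i1]])
      fix y
      have "d p y * d q y \<le> \<bar>d p y\<bar> * \<bar>d q y\<bar>" by (simp add: abs_mult[symmetric])
      also have "\<dots> \<le> T * (g (X q y) + \<mu>T)"
        using d_bnd[of p y] g_bnd[of "X q y"] \<mu>T_ge unfolding d_def
        by (intro mult_mono) auto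
      finally show "d p y * d q y \<le> T * (g (X q y) + \<mu>T)" .
    qed
    also have "\<dots> = (\<integral>z. T * (g z + \<mu>T) \<partial>(M \<Otimes>\<^sub>M M))" by (rule Xint(2)[OF pq(2) i1])
    also have "\<dots> = T * (\<mu>T + \<mu>T)" using gint by (simp add: \<mu>T_def MM.prob_space)
    also have "\<dots> \<le> 2 * T * \<mu>" using \<mu>T_le T by simp
    finally show ?thesis .
  qed
  have card_ov: "card {q \<in> P. {fst p, snd p} \<inter> {fst q, snd q} \<noteq> {}} \<le> 4 * N" for p :: "nat \<times> nat"
  proof -
    have "{q \<in> P. {fst p, snd p} \<inter> {fst q, snd q} \<noteq> {}} \<subseteq> ({fst p, snd p} \<times> {..<N}) \<union> ({..<N} \<times> {fst p, snd p})"
      by (auto simp: P_def)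
    then have "card {q \<in> P. {fst p, snd p} \<inter> {fst q, snd q} \<noteq> {}} \<le> card (({fst p, snd p} \<times> {..<N}) \<union> ({..<N} \<times> {fst p, snd p}))"
      by (rule card_mono[rotated]) auto
    also have "\<dots> \<le> card ({fst p, snd p} \<times> {..<N}) + card ({..<N} \<times> {fst p, snd p})"
      by (rule card_Un_le)
    also have "\<dots> \<le> 2 * N + N * 2"
    proof -
      have c2: "card {fst p, snd p} \<le> 2" by (cases "fst p = snd p") auto
      show ?thesis unfolding card_cartesian_product
        using c2 by (intro add_mono mult_le_mono1 mult_le_mono2) auto
    qed
    finally show ?thesis by simp
  qed
  have row: "(\<Sum>q\<in>P. (\<integral>y. d p y * d q y \<partial>?PN)) \<le> real (4 * N) * (2 * T * \<mu>)" if p: "p \<in> P" for p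
  proof -
    let ?Ov = "{q \<in> P. {fst p, snd p} \<inter> {fst q, snd q} \<noteq> {}}"
    have "(\<Sum>q\<in>P. (\<integral>y. d p y * d q y \<partial>?PN)) \<le> (\<Sum>q\<in>P. if {fst p, snd p} \<inter> {fst q, snd q} \<noteq> {} then 2 * T * \<mu> else 0)"
      by (rule sum_mono) (use dd_ov[OF p] dd_disj[OF p] in auto)
    also have "\<dots> = (\<Sum>q\<in>?Ov. 2 * T * \<mu>)"
      by (rule sum.inter_filter[symmetric, OF finP])
    also have "\<dots> = real (card ?Ov) * (2 * T * \<mu>)" by simp
    also have "\<dots> \<le> real (4 * N) * (2 * T * \<mu>)"
      using card_ov[of p] T \<mu>_ge by (intro mult_right_mono) auto
    finally show ?thesis .
  qed
  have intD2: "(\<integral>y. (D y)\<^sup>2 \<partial>?PN) \<le> 8 * T * \<mu> * (real N)^3"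
  proof -
    have D2: "(D y)\<^sup>2 = (\<Sum>p\<in>P. \<Sum>q\<in>P. d p y * d q y)" for y
      unfolding D_def power2_eq_square by (rule sum_product)
    have "(\<integral>y. (D y)\<^sup>2 \<partial>?PN) = (\<Sum>p\<in>P. \<Sum>q\<in>P. (\<integral>y. d p y * d q y \<partial>?PN))"
      unfolding D2 using ddint
      by (subst Bochner_Integration.integral_sum) (auto intro!: Bochner_Integration.integrable_sum sum.cong Bochner_Integration.integral_sum)
    also have "\<dots> \<le> (\<Sum>p\<in>P. real (4 * N) * (2 * T * \<mu>))"
      by (rule sum_mono) (rule row)
    also have "\<dots> = real (card P) * (real (4 * N) * (2 * T * \<mu>))" by simp
    also have "\<dots> \<le> (real N)\<^sup>2 * (real (4 * N) * (2 * T * \<mu>))"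
      using cardP T \<mu>_ge by (intro mult_right_mono) auto
    also have "\<dots> = 8 * T * \<mu> * (real N)^3" by (simp add: power2_eq_square power3_eq_cube)
    finally show ?thesis .
  qed
  have D2int: "integrable ?PN (\<lambda>y. (D y)\<^sup>2)"
    unfolding D_def power2_eq_square sum_product using ddint by (auto intro!: Bochner_Integration.integrable_sum)
  have mA2: "measure ?PN A2 \<le> 8 * T * \<mu> / real N"
  proof -
    have "measure ?PN A2 \<le> (\<integral>y. (D y)\<^sup>2 \<partial>?PN) / ((real N)\<^sup>2)\<^sup>2"
      unfolding A2_def
      by (rule integral_Markov_inequality_measure[OF D2int, where A="space ?PN"]) (auto, use N in simp)
    also have "\<dots> \<le> 8 * T * \<mu> * (real N)^3 / ((real N)\<^sup>2)\<^sup>2"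
      by (rule divide_right_mono[OF intD2]) simp
    also have "\<dots> = 8 * T * \<mu> / real N" using Npos by (simp add: field_simps power2_eq_square power3_eq_cube)
    finally show ?thesis .
  qed
  have "measure ?PN (space ?PN - E) \<le> measure ?PN (A1 \<union> A2)"
    by (rule PN.finite_measure_mono[OF sub]) (use A1m A2m in auto)
  also have "\<dots> \<le> measure ?PN A1 + measure ?PN A2" by (rule measure_Un_le[OF A1m A2m])
  finally have "measure ?PN (space ?PN - E) \<le> \<beta> + 8 * T * \<mu> / real N" using mA1 mA2 by simp
  moreover have "measure ?PN (space ?PN - E) = 1 - measure ?PN E" by (rule PN.prob_compl[OF Em])
  ultimately have "measure ?PN E \<ge> 1 - (\<beta> + 8 * T * \<mu> / real N)" by simp
  then show ?thesis unfolding E_def \<beta>_def b_def \<mu>_def by simp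
qed

lemma ustat_lim:
  fixes h :: "'a \<times> 'a \<Rightarrow> real"
  assumes hm: "h \<in> borel_measurable (M \<Otimes>\<^sub>M M)" and hpos: "\<And>z. 0 \<le> h z"
    and hint: "integrable (M \<Otimes>\<^sub>M M) h"
  shows "(\<lambda>N. measure (PiM {..<N} (\<lambda>_. M)) {y \<in> space (PiM {..<N} (\<lambda>_. M)).
           (1/(real N)\<^sup>2) * (\<Sum>i<N. \<Sum>j\<in>{..<N} - {i}. h (y i, y j)) \<le> (\<integral>z. h z \<partial>(M \<Otimes>\<^sub>M M)) + 2}) \<longlonglongrightarrow> 1"
proof -
  define \<mu> where "\<mu> = (\<integral>z. h z \<partial>(M \<Otimes>\<^sub>M M))"
  have sq: "filterlim (\<lambda>N. sqrt (real N)) at_top sequentially"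
    by (rule filterlim_compose[OF sqrt_at_top filterlim_real_sequentially])
  define s where "s N z = h z - min (h z) (sqrt (real N))" for N z
  have lim\<beta>: "(\<lambda>N. \<integral>z. s N z \<partial>(M \<Otimes>\<^sub>M M)) \<longlonglongrightarrow> (\<integral>z. 0 \<partial>(M \<Otimes>\<^sub>M M))"
  proof (rule integral_dominated_convergence[where w=h])
    show "(\<lambda>z. 0::real) \<in> borel_measurable (M \<Otimes>\<^sub>M M)" by simp
    show "s N \<in> borel_measurable (M \<Otimes>\<^sub>M M)" for N unfolding s_def using hm by measurable
    show "integrable (M \<Otimes>\<^sub>M M) h" by (rule hint)
    show "AE z in M \<Otimes>\<^sub>M M. (\<lambda>N. s N z) \<longlonglongrightarrow> 0"
    proof (rule AE_I2)
      fix z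
      have "eventually (\<lambda>N. h z \<le> sqrt (real N)) sequentially"
        using sq by (simp add: filterlim_at_top)
      then have "eventually (\<lambda>N. s N z = 0) sequentially"
        by eventually_elim (simp add: s_def)
      then show "(\<lambda>N. s N z) \<longlonglongrightarrow> 0" by (rule tendsto_eventually)
    qed
    show "AE z in M \<Otimes>\<^sub>M M. norm (s N z) \<le> h z" for N
      using hpos by (intro AE_I2) (auto simp: s_def)
  qed
  then have lim\<beta>': "(\<lambda>N. \<integral>z. s N z \<partial>(M \<Otimes>\<^sub>M M)) \<longlonglongrightarrow> 0" by simp
  have "(\<lambda>N. inverse (sqrt (real N))) \<longlonglongrightarrow> 0" by (rule tendsto_inverse_0_at_top[OF sq])
  then have "(\<lambda>N. 8 * \<mu> * inverse (sqrt (real N))) \<longlonglongrightarrow> 8 * \<mu> * 0"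
    by (intro tendsto_mult tendsto_const)
  then have "(\<lambda>N. (\<integral>z. s N z \<partial>(M \<Otimes>\<^sub>M M)) + 8 * \<mu> * inverse (sqrt (real N))) \<longlonglongrightarrow> 0 + 8 * \<mu> * 0"
    by (intro tendsto_add lim\<beta>')
  then have "(\<lambda>N. 1 - ((\<integral>z. s N z \<partial>(M \<Otimes>\<^sub>M M)) + 8 * \<mu> * inverse (sqrt (real N)))) \<longlonglongrightarrow> 1 - 0"
    by (intro tendsto_diff tendsto_const) simp
  then have low: "(\<lambda>N. 1 - ((\<integral>z. s N z \<partial>(M \<Otimes>\<^sub>M M)) + 8 * \<mu> * inverse (sqrt (real N)))) \<longlonglongrightarrow> 1" by simp
  show ?thesis
  proof (rule tendsto_sandwich[OF _ _ low tendsto_const])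
    show "eventually (\<lambda>N. 1 - ((\<integral>z. s N z \<partial>(M \<Otimes>\<^sub>M M)) + 8 * \<mu> * inverse (sqrt (real N))) \<le>
       measure (PiM {..<N} (\<lambda>_. M)) {y \<in> space (PiM {..<N} (\<lambda>_. M)).
           (1/(real N)\<^sup>2) * (\<Sum>i<N. \<Sum>j\<in>{..<N} - {i}. h (y i, y j)) \<le> (\<integral>z. h z \<partial>(M \<Otimes>\<^sub>M M)) + 2}) sequentially"
    proof (rule eventually_sequentiallyI[of 1])
      fix N :: nat assume N: "1 \<le> N"
      have eq: "8 * sqrt (real N) * \<mu> / real N = 8 * \<mu> * inverse (sqrt (real N))"
        using N by (simp add: field_simps)
      have "sqrt (real N) > 0" using N by simp
      then have X: "1 - ((\<integral>z. s N z \<partial>(M \<Otimes>\<^sub>M M)) + 8 * sqrt (real N) * \<mu> / real N) \<le>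
       measure (PiM {..<N} (\<lambda>_. M)) {y \<in> space (PiM {..<N} (\<lambda>_. M)).
           (1/(real N)\<^sup>2) * (\<Sum>i<N. \<Sum>j\<in>{..<N} - {i}. h (y i, y j)) \<le> (\<integral>z. h z \<partial>(M \<Otimes>\<^sub>M M)) + 2}"
        using ustat_bound[OF hm hpos hint N] unfolding s_def \<mu>_def by blast
      show "1 - ((\<integral>z. s N z \<partial>(M \<Otimes>\<^sub>M M)) + 8 * \<mu> * inverse (sqrt (real N))) \<le>
       measure (PiM {..<N} (\<lambda>_. M)) {y \<in> space (PiM {..<N} (\<lambda>_. M)).
           (1/(real N)\<^sup>2) * (\<Sum>i<N. \<Sum>j\<in>{..<N} - {i}. h (y i, y j)) \<le> (\<integral>z. h z \<partial>(M \<Otimes>\<^sub>M M)) + 2}"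
        by (simp only: eq[symmetric] X)
    qed
    show "eventually (\<lambda>N. measure (PiM {..<N} (\<lambda>_. M)) {y \<in> space (PiM {..<N} (\<lambda>_. M)).
           (1/(real N)\<^sup>2) * (\<Sum>i<N. \<Sum>j\<in>{..<N} - {i}. h (y i, y j)) \<le> (\<integral>z. h z \<partial>(M \<Otimes>\<^sub>M M)) + 2} \<le> 1) sequentially"
      by (intro always_eventually allI prob_space.prob_le_1 prob_space_PiM M)
  qed
qed

end

lemma mindist_lim:
  fixes M :: "'a::metric_space measure" and c \<nu> C :: real
  assumes M: "prob_space M" and dm: "(\<lambda>z. dist (fst z) (snd z)) \<in> borel_measurable (M \<Otimes>\<^sub>M M)"
    and bound: "\<And>r. r > 0 \<Longrightarrow> measure (M \<Otimes>\<^sub>M M) {z \<in> space (M \<Otimes>\<^sub>M M). dist (fst z) (snd z) < r} \<le> c * r^3"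
    and \<nu>: "0 < \<nu>" "\<nu> < 1/3" and C: "C > 0"
  shows "(\<lambda>N. measure (PiM {..<N} (\<lambda>_. M)) {y \<in> space (PiM {..<N} (\<lambda>_. M)). \<forall>i<N. \<forall>j<N. i \<noteq> j \<longrightarrow>
                  dist (y i) (y j) \<ge> C / real N powr (1 - \<nu>)}) \<longlonglongrightarrow> 1"
proof -
  have c0: "0 \<le> c"
  proof -
    have "0 \<le> measure (M \<Otimes>\<^sub>M M) {z \<in> space (M \<Otimes>\<^sub>M M). dist (fst z) (snd z) < 1}" by simp
    moreover have "measure (M \<Otimes>\<^sub>M M) {z \<in> space (M \<Otimes>\<^sub>M M). dist (fst z) (snd z) < 1} \<le> c"
      using bound[of 1] by simp
    ultimately show ?thesis by linarith
  qed
  have lim0: "(\<lambda>N. real N powr (3 * \<nu> - 1)) \<longlonglongrightarrow> 0"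
    by (rule tendsto_neg_powr[OF _ filterlim_real_sequentially]) (use \<nu> in simp)
  have "(\<lambda>N. 1 - c * C^3 * real N powr (3 * \<nu> - 1)) \<longlonglongrightarrow> 1 - c * C^3 * 0"
    by (intro tendsto_diff tendsto_mult tendsto_const lim0)
  then have low: "(\<lambda>N. 1 - c * C^3 * real N powr (3 * \<nu> - 1)) \<longlonglongrightarrow> 1" by simp
  show ?thesis
  proof (rule tendsto_sandwich[OF _ _ low tendsto_const])
    show "eventually (\<lambda>N. measure (PiM {..<N} (\<lambda>_. M)) {y \<in> space (PiM {..<N} (\<lambda>_. M)). \<forall>i<N. \<forall>j<N. i \<noteq> j \<longrightarrow>
                  dist (y i) (y j) \<ge> C / real N powr (1 - \<nu>)} \<le> 1) sequentially"
      by (intro always_eventually allI prob_space.prob_le_1 prob_space_PiM M)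
    show "eventually (\<lambda>N. 1 - c * C^3 * real N powr (3 * \<nu> - 1) \<le> measure (PiM {..<N} (\<lambda>_. M)) {y \<in> space (PiM {..<N} (\<lambda>_. M)). \<forall>i<N. \<forall>j<N. i \<noteq> j \<longrightarrow>
                  dist (y i) (y j) \<ge> C / real N powr (1 - \<nu>)}) sequentially"
    proof (rule eventually_sequentiallyI[of 1])
      fix N :: nat assume N: "1 \<le> N"
      let ?PN = "PiM {..<N} (\<lambda>_. M)"
      interpret PN: prob_space ?PN by (rule prob_space_PiM) (rule M)
      define r where "r = C / real N powr (1 - \<nu>)"
      have Npos: "real N > 0" using N by simp
      have r0: "r > 0" unfolding r_def using C Npos by simp
      define B where "B = {z \<in> space (M \<Otimes>\<^sub>M M). dist (fst z) (snd z) < r}"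
      have Bm: "B \<in> sets (M \<Otimes>\<^sub>M M)" unfolding B_def using dm by measurable
      define P where "P = Sigma {..<N} (\<lambda>i. {..<N} - {i})"
      have finP: "finite P" unfolding P_def by auto
      have "card P \<le> card ({..<N} \<times> {..<N})"
        by (rule card_mono) (auto simp: P_def)
      then have cardP: "real (card P) \<le> (real N)\<^sup>2"
        by (simp add: card_cartesian_product power2_eq_square flip: of_nat_mult)
      define A where "A p = {y \<in> space ?PN. (y (fst p), y (snd p)) \<in> B}" for p :: "nat \<times> nat"
      have Am: "A p \<in> sets ?PN" if "p \<in> P" for p
      proof -
        have "(\<lambda>y. (y (fst p), y (snd p))) -` B \<inter> space ?PN \<in> sets ?PN"
          by (rule measurable_sets[OF Xp_meas[OF M] Bm]) (use that in \<open>auto simp: P_def\<close>)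
        moreover have "(\<lambda>y. (y (fst p), y (snd p))) -` B \<inter> space ?PN = A p" by (auto simp: A_def)
        ultimately show ?thesis by simp
      qed
      have mA: "measure ?PN (A p) \<le> c * r^3" if "p \<in> P" for p
      proof -
        have "measure ?PN (A p) = measure (M \<Otimes>\<^sub>M M) B"
          unfolding A_def by (rule pair_measure[OF M _ _ _ Bm]) (use that in \<open>auto simp: P_def\<close>)
        also have "\<dots> \<le> c * r^3" unfolding B_def by (rule bound[OF r0])
        finally show ?thesis .
      qed
      define E where "E = {y \<in> space ?PN. \<forall>i<N. \<forall>j<N. i \<noteq> j \<longrightarrow> dist (y i) (y j) \<ge> C / real N powr (1 - \<nu>)}"
      have Eeq: "E = space ?PN - (\<Union>p\<in>P. A p)"
        unfolding E_def A_def B_def P_def r_def by (auto simp: space_pair_measure space_PiM not_le) (metis not_le, force simp: not_less PiE_iff)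
      have Um: "(\<Union>p\<in>P. A p) \<in> sets ?PN" using Am finP by auto
      have "measure ?PN (\<Union>p\<in>P. A p) \<le> (\<Sum>p\<in>P. measure ?PN (A p))"
        by (rule measure_UNION_le[OF finP Am])
      also have "\<dots> \<le> (\<Sum>p\<in>P. c * r^3)" by (rule sum_mono) (rule mA)
      also have "\<dots> = real (card P) * (c * r^3)" by simp
      also have "\<dots> \<le> (real N)\<^sup>2 * (c * r^3)" using cardP c0 r0 by (intro mult_right_mono) auto
      also have "(real N)\<^sup>2 * (c * r^3) = c * C^3 * real N powr (3 * \<nu> - 1)"
      proof -
        have e1: "(real N powr (1 - \<nu>))^3 = real N powr ((1 - \<nu>) + (1 - \<nu>) + (1 - \<nu>))"
          by (simp only: power3_eq_cube powr_add)
        have e2: "(1 - \<nu>) + (1 - \<nu>) + (1 - \<nu>) = 3 - 3 * \<nu>" by simp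
        have e3: "real N powr (3 * \<nu> - 1) = real N powr (2 - (3 - 3 * \<nu>))"
          by (rule arg_cong[where f="\<lambda>t. real N powr t"]) simp
        have e4: "real N powr (2 - (3 - 3 * \<nu>)) = real N powr 2 / real N powr (3 - 3 * \<nu>)"
          by (rule powr_diff)
        have e5: "real N powr 2 = (real N)\<^sup>2" using Npos by (simp add: powr_numeral)
        have e6: "(real N)\<^sup>2 * (c * r^3) = c * C^3 * ((real N)\<^sup>2 / (real N powr (1 - \<nu>))^3)"
          unfolding r_def by (simp add: power_divide)
        show ?thesis unfolding e6 e1 e2 e3 e4 e5 ..
      qed
      finally have "measure ?PN (\<Union>p\<in>P. A p) \<le> c * C^3 * real N powr (3 * \<nu> - 1)" .
      moreover have "measure ?PN E = 1 - measure ?PN (\<Union>p\<in>P. A p)"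
        unfolding Eeq by (rule PN.prob_compl[OF Um])
      ultimately show "1 - c * C^3 * real N powr (3 * \<nu> - 1) \<le> measure ?PN {y \<in> space ?PN. \<forall>i<N. \<forall>j<N. i \<noteq> j \<longrightarrow> dist (y i) (y j) \<ge> C / real N powr (1 - \<nu>)}"
        unfolding E_def by simp
    qed
  qed
qed




context
  fixes W :: "real^3 \<Rightarrow> real"
  assumes W_meas: "W \<in> borel_measurable lborel" and W_nonneg: "\<And>x. W x \<ge> 0"
    and W_L1: "integrable lborel W" and W_prob: "integral\<^sup>L lborel W = 1"
begin

abbreviation MW where "MW \<equiv> density lborel (\<lambda>x. ennreal (W x))"

lemma Wb[measurable]: "W \<in> borel_measurable borel" using W_meas by simp

lemma MW_prob: "prob_space MW"
proof (rule prob_spaceI)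
  have "emeasure MW (space MW) = (\<integral>\<^sup>+x. ennreal (W x) \<partial>lborel)"
    by (subst emeasure_density) auto
  also have "\<dots> = ennreal (integral\<^sup>L lborel W)"
    by (rule nn_integral_eq_integral[OF W_L1]) (simp add: W_nonneg)
  finally show "emeasure MW (space MW) = 1" using W_prob by simp
qed

lemma sLL: "sets (lborel \<Otimes>\<^sub>M lborel :: ((real^3) \<times> (real^3)) measure) = sets borel"
  by (simp only: lborel_prod sets_lborel)

lemma sMM: "sets (MW \<Otimes>\<^sub>M MW) = sets borel"
  using sets_pair_measure_cong[of MW lborel MW lborel] sLL by simp

lemma mLL: "measurable (lborel \<Otimes>\<^sub>M lborel :: ((real^3) \<times> (real^3)) measure) N = measurable borel N"
  by (rule measurable_cong_sets[OF sLL refl])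

lemma mMM: "measurable (MW \<Otimes>\<^sub>M MW) N = measurable borel N"
  by (rule measurable_cong_sets[OF sMM refl])

lemma test1: "(\<lambda>z. dist (fst z) (snd z)) \<in> borel_measurable (lborel \<Otimes>\<^sub>M lborel :: ((real^3) \<times> (real^3)) measure)"
  by measurable

lemma test2: "(\<lambda>z::(real^3) \<times> (real^3). ennreal ((W (snd z))\<^sup>2)) \<in> borel_measurable (lborel \<Otimes>\<^sub>M lborel)"
  by measurable

lemma nn_pair:
  assumes F[measurable]: "F \<in> borel_measurable (lborel \<Otimes>\<^sub>M lborel :: ((real^3) \<times> (real^3)) measure)"
  shows "(\<integral>\<^sup>+z. F z \<partial>(MW \<Otimes>\<^sub>M MW)) = (\<integral>\<^sup>+x. ennreal (W x) * (\<integral>\<^sup>+y. ennreal (W y) * F (x,y) \<partial>lborel) \<partial>lborel)"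
proof -
  interpret MWs: sigma_finite_measure MW by (rule prob_space_imp_sigma_finite[OF MW_prob])
  have F': "F \<in> borel_measurable (MW \<Otimes>\<^sub>M MW)" using F by (simp add: mMM mLL)
  have "(\<integral>\<^sup>+z. F z \<partial>(MW \<Otimes>\<^sub>M MW)) = (\<integral>\<^sup>+x. \<integral>\<^sup>+y. F (x,y) \<partial>MW \<partial>MW)"
    by (rule MWs.nn_integral_fst[symmetric, OF F'])
  also have "\<dots> = (\<integral>\<^sup>+x. (\<integral>\<^sup>+y. ennreal (W y) * F (x,y) \<partial>lborel) \<partial>MW)"
  proof (rule nn_integral_cong)
    fix x
    have "(\<lambda>y. F (x, y)) \<in> borel_measurable lborel"
      by (rule measurable_Pair2[OF F]) simp
    then show "(\<integral>\<^sup>+y. F (x,y) \<partial>MW) = (\<integral>\<^sup>+y. ennreal (W y) * F (x,y) \<partial>lborel)"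
      by (intro nn_integral_density) auto
  qed
  also have "\<dots> = (\<integral>\<^sup>+x. ennreal (W x) * (\<integral>\<^sup>+y. ennreal (W y) * F (x,y) \<partial>lborel) \<partial>lborel)"
  proof (rule nn_integral_density)
    show "(\<lambda>x. ennreal (W x)) \<in> borel_measurable lborel" by simp
    have "(\<lambda>z. ennreal (W (snd z)) * F z) \<in> borel_measurable (lborel \<Otimes>\<^sub>M lborel)" by measurable
    from lborel.borel_measurable_nn_integral_fst[OF this]
    show "(\<lambda>x. \<integral>\<^sup>+y. ennreal (W y) * F (x,y) \<partial>lborel) \<in> borel_measurable lborel" by simp
  qed
  finally show ?thesis .
qed


lemma KB:
  fixes k :: "real \<Rightarrow> ennreal"
  assumes k[measurable]: "k \<in> borel_measurable borel"
  shows "(\<integral>\<^sup>+z. k (dist (fst z) (snd z)) \<partial>(MW \<Otimes>\<^sub>M MW))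
     \<le> 2 * (\<integral>\<^sup>+x. ennreal ((W x)\<^sup>2) \<partial>lborel) * (\<integral>\<^sup>+z. k (norm z) \<partial>(lborel :: (real^3) measure))"
proof -
  let ?K = "(\<integral>\<^sup>+z. k (norm z) \<partial>(lborel :: (real^3) measure))"
  let ?Q = "(\<integral>\<^sup>+x. ennreal ((W x)\<^sup>2) \<partial>lborel)"
  have tr1: "(\<integral>\<^sup>+y. k (dist x y) \<partial>lborel) = ?K" for x :: "real^3"
  proof -
    have "(\<integral>\<^sup>+y. k (dist x y) \<partial>lborel) = (\<integral>\<^sup>+y. k (dist x y) \<partial>distr lborel borel ((+) x))"
      by (simp add: lborel_distr_plus)
    also have "\<dots> = (\<integral>\<^sup>+z. k (dist x (x + z)) \<partial>lborel)"
      by (rule nn_integral_distr) auto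
    also have "\<dots> = ?K" by (simp add: dist_norm)
    finally show ?thesis .
  qed
  have tr2: "(\<integral>\<^sup>+x. k (dist x y) \<partial>lborel) = ?K" for y :: "real^3"
    using tr1[of y] by (simp add: dist_commute)
  have pw: "ennreal (W x) * (ennreal (W y) * k (dist x y)) \<le> ennreal ((W x)\<^sup>2) * k (dist x y) + ennreal ((W y)\<^sup>2) * k (dist x y)" for x y
  proof -
    have "0 \<le> (W x - W y)\<^sup>2" by simp
    then have r: "W x * W y \<le> (W x)\<^sup>2 + (W y)\<^sup>2"
      using mult_nonneg_nonneg[OF W_nonneg[of x] W_nonneg[of y]] by (simp add: power2_eq_square algebra_simps)
    have "ennreal (W x) * (ennreal (W y) * k (dist x y)) = ennreal (W x * W y) * k (dist x y)"
      using W_nonneg by (simp add: ennreal_mult mult.assoc)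
    also have "\<dots> \<le> ennreal ((W x)\<^sup>2 + (W y)\<^sup>2) * k (dist x y)"
      by (intro mult_right_mono ennreal_leI r) simp
    also have "\<dots> = ennreal ((W x)\<^sup>2) * k (dist x y) + ennreal ((W y)\<^sup>2) * k (dist x y)"
      by (simp add: distrib_right ennreal_plus)
    finally show ?thesis .
  qed
  have "(\<integral>\<^sup>+z. k (dist (fst z) (snd z)) \<partial>(MW \<Otimes>\<^sub>M MW))
      = (\<integral>\<^sup>+x. ennreal (W x) * (\<integral>\<^sup>+y. ennreal (W y) * k (dist x y) \<partial>lborel) \<partial>lborel)"
    by (subst nn_pair) auto
  also have "\<dots> \<le> (\<integral>\<^sup>+x. ennreal ((W x)\<^sup>2) * ?K + (\<integral>\<^sup>+y. ennreal ((W y)\<^sup>2) * k (dist x y) \<partial>lborel) \<partial>lborel)"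
  proof (rule nn_integral_mono)
    fix x :: "real^3"
    have "ennreal (W x) * (\<integral>\<^sup>+y. ennreal (W y) * k (dist x y) \<partial>lborel)
        = (\<integral>\<^sup>+y. ennreal (W x) * (ennreal (W y) * k (dist x y)) \<partial>lborel)"
      by (rule nn_integral_cmult[symmetric]) auto
    also have "\<dots> \<le> (\<integral>\<^sup>+y. ennreal ((W x)\<^sup>2) * k (dist x y) + ennreal ((W y)\<^sup>2) * k (dist x y) \<partial>lborel)"
      by (rule nn_integral_mono) (rule pw)
    also have "\<dots> = (\<integral>\<^sup>+y. ennreal ((W x)\<^sup>2) * k (dist x y) \<partial>lborel) + (\<integral>\<^sup>+y. ennreal ((W y)\<^sup>2) * k (dist x y) \<partial>lborel)"
      by (rule nn_integral_add) auto
    also have "(\<integral>\<^sup>+y. ennreal ((W x)\<^sup>2) * k (dist x y) \<partial>lborel) = ennreal ((W x)\<^sup>2) * ?K"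
      by (subst nn_integral_cmult) (auto simp: tr1)
    finally show "ennreal (W x) * (\<integral>\<^sup>+y. ennreal (W y) * k (dist x y) \<partial>lborel)
        \<le> ennreal ((W x)\<^sup>2) * ?K + (\<integral>\<^sup>+y. ennreal ((W y)\<^sup>2) * k (dist x y) \<partial>lborel)" .
  qed
  also have "\<dots> = (\<integral>\<^sup>+x. ennreal ((W x)\<^sup>2) * ?K \<partial>lborel) + (\<integral>\<^sup>+x. \<integral>\<^sup>+y. ennreal ((W y)\<^sup>2) * k (dist x y) \<partial>lborel \<partial>lborel)"
  proof (rule nn_integral_add)
    show "(\<lambda>x. ennreal ((W x)\<^sup>2) * ?K) \<in> borel_measurable lborel" by measurable
    have "(\<lambda>z. ennreal ((W (snd z))\<^sup>2) * k (dist (fst z) (snd z))) \<in> borel_measurable (lborel \<Otimes>\<^sub>M lborel)" by measurable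
    from lborel.borel_measurable_nn_integral_fst[OF this]
    show "(\<lambda>x. \<integral>\<^sup>+y. ennreal ((W y)\<^sup>2) * k (dist x y) \<partial>lborel) \<in> borel_measurable lborel" by simp
  qed
  also have "(\<integral>\<^sup>+x. ennreal ((W x)\<^sup>2) * ?K \<partial>lborel) = ?Q * ?K"
    by (rule nn_integral_multc) auto
  also have "(\<integral>\<^sup>+x. \<integral>\<^sup>+y. ennreal ((W y)\<^sup>2) * k (dist x y) \<partial>lborel \<partial>lborel)
      = (\<integral>\<^sup>+y. \<integral>\<^sup>+x. ennreal ((W y)\<^sup>2) * k (dist x y) \<partial>lborel \<partial>lborel)"
  proof -
    have "(\<lambda>(x, y). ennreal ((W y)\<^sup>2) * k (dist x y)) \<in> borel_measurable (lborel \<Otimes>\<^sub>M lborel)"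
      unfolding case_prod_beta by measurable
    from lborel_pair.Fubini'[OF this] show ?thesis by simp
  qed
  also have "\<dots> = (\<integral>\<^sup>+y. ennreal ((W y)\<^sup>2) * ?K \<partial>lborel)"
    by (rule nn_integral_cong) (subst nn_integral_cmult, auto simp: tr2)
  also have "\<dots> = ?Q * ?K"
    by (rule nn_integral_multc) auto
  finally have fin: "(\<integral>\<^sup>+z. k (dist (fst z) (snd z)) \<partial>(MW \<Otimes>\<^sub>M MW)) \<le> ?Q * ?K + ?Q * ?K" .
  have eq: "?Q * ?K + ?Q * ?K = 2 * ?Q * ?K" by (simp only: mult_2 distrib_right)
  show ?thesis using fin by (simp only: eq)
qed

lemma Q_fin:
  assumes p: "p > 3" and W_Lp: "integrable lborel (\<lambda>x. \<bar>W x\<bar> powr p)"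
  shows "(\<integral>\<^sup>+x. ennreal ((W x)\<^sup>2) \<partial>lborel) < \<infinity>"
proof -
  have pw: "(W x)\<^sup>2 \<le> W x + \<bar>W x\<bar> powr p" for x
  proof (cases "W x \<le> 1")
    case True
    have "(W x)\<^sup>2 \<le> W x" using True W_nonneg[of x] by (simp add: power2_eq_square mult_left_le)
    then show ?thesis using powr_ge_zero[of "\<bar>W x\<bar>" p] by linarith
  next
    case False
    then have "W x powr 2 \<le> W x powr p" using p by (intro powr_mono) auto
    then show ?thesis using False W_nonneg[of x] by simp
  qed
  have "(\<integral>\<^sup>+x. ennreal ((W x)\<^sup>2) \<partial>lborel) \<le> (\<integral>\<^sup>+x. ennreal (W x) + ennreal (\<bar>W x\<bar> powr p) \<partial>lborel)"
    by (rule nn_integral_mono) (use pw W_nonneg in \<open>simp add: ennreal_plus[symmetric] del: ennreal_plus\<close>)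
  also have "\<dots> = (\<integral>\<^sup>+x. ennreal (W x) \<partial>lborel) + (\<integral>\<^sup>+x. ennreal (\<bar>W x\<bar> powr p) \<partial>lborel)"
    by (rule nn_integral_add) auto
  also have "(\<integral>\<^sup>+x. ennreal (W x) \<partial>lborel) = ennreal (integral\<^sup>L lborel W)"
    by (rule nn_integral_eq_integral[OF W_L1]) (simp add: W_nonneg)
  also have "(\<integral>\<^sup>+x. ennreal (\<bar>W x\<bar> powr p) \<partial>lborel) = ennreal (\<integral>x. \<bar>W x\<bar> powr p \<partial>lborel)"
    by (rule nn_integral_eq_integral[OF W_Lp]) simp
  finally have le: "(\<integral>\<^sup>+x. ennreal ((W x)\<^sup>2) \<partial>lborel) \<le> ennreal (integral\<^sup>L lborel W) + ennreal (\<integral>x. \<bar>W x\<bar> powr p \<partial>lborel)" .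
  show ?thesis by (rule le_less_trans[OF le]) simp
qed

end

lemma ball_bound:
  assumes r: "r > 0"
  shows "(\<integral>\<^sup>+z. indicator {..<r} (norm z) \<partial>(lborel :: (real^3) measure)) \<le> ennreal (unit_ball_vol 3 * r^3)"
proof -
  have "(\<integral>\<^sup>+z. indicator {..<r} (norm z) \<partial>(lborel :: (real^3) measure)) = (\<integral>\<^sup>+z. indicator (ball 0 r) z \<partial>(lborel :: (real^3) measure))"
    by (rule nn_integral_cong) (auto simp: indicator_def dist_norm)
  also have "\<dots> = emeasure lborel (ball (0::real^3) r)" by simp
  also have "\<dots> \<le> emeasure lborel (cball (0::real^3) r)" by (rule emeasure_mono) auto
  also have "\<dots> = ennreal (unit_ball_vol 3 * r^3)"
  proof -
    have "DIM(real^3) = 3" by simp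
    then show ?thesis using emeasure_cball[of r "0::real^3"] r by simp
  qed
  finally show ?thesis .
qed

lemma sing_int:
  fixes a :: real assumes a: "0 \<le> a" "a < 3"
  shows "(\<integral>\<^sup>+z. ennreal (indicator {..<1} (norm z) * (1 / norm z powr a)) \<partial>(lborel :: (real^3) measure)) < \<infinity>"
proof -
  define V where "V = unit_ball_vol 3"
  define q where "q = 2 powr a / 8"
  have V0: "0 \<le> V" unfolding V_def by simp
  have q0: "0 \<le> q" unfolding q_def by simp
  have "2 powr a < 2 powr 3" by (rule powr_less_mono) (use a in auto)
  then have q1: "q < 1" unfolding q_def by simp
  define f where "f n z = ennreal ((2 powr a)^Suc n) * indicator (cball (0::real^3) ((1/2)^n)) z" for n z
  have fm: "f n \<in> borel_measurable lborel" for n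
  proof -
    have "cball (0::real^3) ((1/2)^n) \<in> sets lborel" by simp
    then have "indicator (cball (0::real^3) ((1/2)^n)) \<in> borel_measurable lborel"
      by (rule borel_measurable_indicator)
    moreover have "(\<lambda>z::real^3. ennreal ((2 powr a)^Suc n)) \<in> borel_measurable lborel"
      by (rule borel_measurable_const)
    ultimately show ?thesis unfolding f_def
      by (rule borel_measurable_times_ennreal[rotated])
  qed
  have pw: "ennreal (indicator {..<1} (norm z) * (1 / norm z powr a)) \<le> (\<Sum>n. f n z)" for z
  proof (cases "z \<noteq> 0 \<and> norm z < 1")
    case False
    then show ?thesis by auto
  next
    case True
    define t where "t = norm z"
    have t: "0 < t" "t < 1" using True unfolding t_def by auto
    obtain m where m: "\<not> (1/2::real)^m < t" "(1/2::real)^Suc m < t"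
      using exists_least_lemma[of "\<lambda>n. (1/2::real)^n < t"] real_arch_pow_inv[of t "1/2"] t by auto
    have "1 / (2::real)^Suc m < t" using m(2) by (simp only: power_one_over)
    then have "1 < t * 2^Suc m" using t by (simp add: divide_less_eq mult.commute)
    then have "1 / t < 2^Suc m" using t by (simp add: divide_less_eq mult.commute)
    then have "(1/t) powr a \<le> (2^Suc m) powr a"
      using t a by (intro powr_mono2) auto
    also have "(2^Suc m :: real) powr a = (2 powr a)^Suc m"
    proof -
      have "(2::real)^Suc m = 2 powr (real (Suc m))" by (rule powr_realpow[symmetric]) simp
      then have "(2^Suc m :: real) powr a = 2 powr (real (Suc m) * a)" by (simp only: powr_powr)
      also have "\<dots> = (2 powr a)^Suc m" by (rule powr_power[symmetric]) simp
      finally show ?thesis .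
    qed
    also have "(1/t) powr a = 1 / t powr a" by (simp only: powr_divide powr_one_eq_one)
    finally have b: "1 / t powr a \<le> (2 powr a)^Suc m" .
    have zin: "z \<in> cball 0 ((1/2)^m)" using m(1) unfolding t_def by (simp add: not_less)
    have "ennreal (indicator {..<1} (norm z) * (1 / norm z powr a)) = ennreal (1 / t powr a)"
      using t unfolding t_def by simp
    also have "\<dots> \<le> f m z" unfolding f_def using zin b by (simp add: ennreal_leI)
    also have "\<dots> \<le> (\<Sum>n. f n z)"
      by (metis ennreal_suminf_lessD not_le order_less_irrefl)
    finally show ?thesis .
  qed
  have "(\<integral>\<^sup>+z. ennreal (indicator {..<1} (norm z) * (1 / norm z powr a)) \<partial>(lborel :: (real^3) measure)) \<le> (\<integral>\<^sup>+z. (\<Sum>n. f n z) \<partial>lborel)"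
    by (rule nn_integral_mono) (rule pw)
  also have "\<dots> = (\<Sum>n. \<integral>\<^sup>+z. f n z \<partial>lborel)"
    by (rule nn_integral_suminf) (rule fm)
  also have "\<dots> = (\<Sum>n. ennreal (2 powr a * V * q^n))"
  proof (rule suminf_cong)
    fix n
    have e8: "((1/2::real)^n)^3 = (1/8)^n"
    proof -
      have "((1/2::real)^n)^3 = ((1/2)^3)^n" by (simp only: power_mult[symmetric] mult.commute)
      also have "(1/2::real)^3 = 1/8" by (simp add: power_divide)
      finally show ?thesis .
    qed
    have "(\<integral>\<^sup>+z. f n z \<partial>lborel) = ennreal ((2 powr a)^Suc n) * emeasure lborel (cball (0::real^3) ((1/2)^n))"
      unfolding f_def by (rule nn_integral_cmult_indicator) simp
    also have "\<dots> = ennreal ((2 powr a)^Suc n) * ennreal (V * ((1/2)^n)^3)"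
    proof -
      have "DIM(real^3) = 3" by simp
      then show ?thesis using emeasure_cball[of "(1/2::real)^n" "0::real^3"] by (simp add: V_def)
    qed
    also have "\<dots> = ennreal ((2 powr a)^Suc n * (V * ((1/2)^n)^3))"
      using V0 by (simp add: ennreal_mult)
    also have "(2 powr a)^Suc n * (V * ((1/2)^n)^3) = 2 powr a * V * q^n"
      unfolding e8 q_def by (simp add: power_divide power_one_over algebra_simps)
    finally show "(\<integral>\<^sup>+z. f n z \<partial>lborel) = ennreal (2 powr a * V * q^n)" .
  qed
  also have "\<dots> = ennreal (\<Sum>n. 2 powr a * V * q^n)"
    by (rule suminf_ennreal2) (use V0 q0 q1 in \<open>auto intro!: summable_mult summable_geometric\<close>)
  also have "\<dots> < \<infinity>" by simp
  finally show ?thesis .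
qed



theorem lemma2p1:
  fixes W :: "real^3 \<Rightarrow> real" and p :: real
  assumes W_meas: "W \<in> borel_measurable lborel"
    and W_nonneg: "\<And>x. W x \<ge> 0"
    and W_L1: "integrable lborel W"
    and W_prob: "integral\<^sup>L lborel W = 1"
    and p_gt: "p > 3"
    and W_Lp: "integrable lborel (\<lambda>x. \<bar>W x\<bar> powr p)"
  shows "(\<forall>\<nu> C. 0 < \<nu> \<and> \<nu> < nu_star p \<and> C > 0 \<longrightarrow>
           (\<lambda>N. measure (iid_law W N)
              {y \<in> space (iid_law W N). \<forall>i<N. \<forall>j<N. i \<noteq> j \<longrightarrow>
                  dist (y i) (y j) \<ge> C / real N powr (1 - \<nu>)}) \<longlonglongrightarrow> 1)
       \<and> (\<forall>\<xi>. 0 < \<xi> \<and> \<xi> \<le> 1 \<longrightarrow> (\<exists>C\<^sub>\<xi>.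
           (\<lambda>N. measure (iid_law W N)
              {y \<in> space (iid_law W N).
                 (1 / (real N)\<^sup>2) * (\<Sum>i<N. \<Sum>j\<in>{..<N} - {i}. 1 / dist (y i) (y j) powr (3 - \<xi>))
                   \<le> C\<^sub>\<xi>}) \<longlonglongrightarrow> 1))"
proof -
  let ?M = "density lborel (\<lambda>x. ennreal (W x))"
  note WA = W_meas W_nonneg W_L1 W_prob
  have M: "prob_space ?M" by (rule MW_prob[OF WA])
  interpret MM: prob_space "?M \<Otimes>\<^sub>M ?M" by (rule prob_space_pair[OF M M])
  have iid: "iid_law W N = PiM {..<N} (\<lambda>_. ?M)" for N by (simp add: iid_law_def)
  have mconv: "f \<in> borel_measurable (?M \<Otimes>\<^sub>M ?M)" if "f \<in> borel_measurable (lborel \<Otimes>\<^sub>M lborel)" for f :: "(real^3) \<times> (real^3) \<Rightarrow> real"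
    using that by (simp add: mMM[OF WA] mLL[OF WA])
  have dm: "(\<lambda>z. dist (fst z) (snd z)) \<in> borel_measurable (?M \<Otimes>\<^sub>M ?M)"
    by (rule mconv) measurable
  have spMM: "space (?M \<Otimes>\<^sub>M ?M) = UNIV" by (simp add: space_pair_measure)
  obtain q where q: "(\<integral>\<^sup>+x. ennreal ((W x)\<^sup>2) \<partial>lborel) = ennreal q" "0 \<le> q"
    using Q_fin[OF WA p_gt W_Lp] by (auto simp: less_top_ennreal)
  define V where "V = unit_ball_vol 3"
  have V0: "0 \<le> V" unfolding V_def by simp
  have bound: "measure (?M \<Otimes>\<^sub>M ?M) {z \<in> space (?M \<Otimes>\<^sub>M ?M). dist (fst z) (snd z) < r} \<le> (2 * q * V) * r^3"
    if r: "r > 0" for r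
  proof -
    let ?B = "{z \<in> space (?M \<Otimes>\<^sub>M ?M). dist (fst z) (snd z) < r}"
    have Bm: "?B \<in> sets (?M \<Otimes>\<^sub>M ?M)" using dm by measurable
    have "emeasure (?M \<Otimes>\<^sub>M ?M) ?B = (\<integral>\<^sup>+z. indicator ?B z \<partial>(?M \<Otimes>\<^sub>M ?M))"
      by (rule nn_integral_indicator[OF Bm, symmetric])
    also have "\<dots> = (\<integral>\<^sup>+z. (indicator {..<r} :: real \<Rightarrow> ennreal) (dist (fst z) (snd z)) \<partial>(?M \<Otimes>\<^sub>M ?M))"
      by (rule nn_integral_cong) (auto simp: indicator_def spMM)
    also have "\<dots> \<le> 2 * (\<integral>\<^sup>+x. ennreal ((W x)\<^sup>2) \<partial>lborel) * (\<integral>\<^sup>+z. (indicator {..<r} :: real \<Rightarrow> ennreal) (norm z) \<partial>(lborel :: (real^3) measure))"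
      by (rule KB[OF WA]) measurable
    also have "\<dots> \<le> 2 * ennreal q * ennreal (V * r^3)"
      unfolding q(1) V_def by (intro mult_left_mono ball_bound r) auto
    also have "\<dots> = ennreal (2 * q * V * r^3)"
    proof -
      have e: "ennreal (2 * q * V * r^3) = ennreal (2 * q) * ennreal (V * r^3)"
        using q(2) V0 r by (simp add: ennreal_mult[symmetric] mult.assoc)
      have e2: "ennreal (2 * q) = 2 * ennreal q" using q(2) by (simp add: ennreal_mult)
      show ?thesis by (simp only: e e2)
    qed
    finally have "emeasure (?M \<Otimes>\<^sub>M ?M) ?B \<le> ennreal (2 * q * V * r^3)" .
    then show ?thesis unfolding measure_def
      by (intro enn2real_leI) (use q(2) V0 r in auto)
  qed
  have part1: "\<forall>\<nu> C. 0 < \<nu> \<and> \<nu> < nu_star p \<and> C > 0 \<longrightarrow>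
           (\<lambda>N. measure (iid_law W N)
              {y \<in> space (iid_law W N). \<forall>i<N. \<forall>j<N. i \<noteq> j \<longrightarrow>
                  dist (y i) (y j) \<ge> C / real N powr (1 - \<nu>)}) \<longlonglongrightarrow> 1"
  proof (intro allI impI)
    fix \<nu> C :: real assume h: "0 < \<nu> \<and> \<nu> < nu_star p \<and> C > 0"
    have "nu_star p < 1/3" unfolding nu_star_def using p_gt by (simp add: field_simps)
    then have \<nu>: "0 < \<nu>" "\<nu> < 1/3" using h by auto
    show "(\<lambda>N. measure (iid_law W N)
              {y \<in> space (iid_law W N). \<forall>i<N. \<forall>j<N. i \<noteq> j \<longrightarrow>
                  dist (y i) (y j) \<ge> C / real N powr (1 - \<nu>)}) \<longlonglongrightarrow> 1"
      unfolding iid by (rule mindist_lim[OF M dm bound \<nu>]) (use h in auto)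
  qed
  have part2: "\<forall>\<xi>. 0 < \<xi> \<and> \<xi> \<le> 1 \<longrightarrow> (\<exists>C\<^sub>\<xi>.
           (\<lambda>N. measure (iid_law W N)
              {y \<in> space (iid_law W N).
                 (1 / (real N)\<^sup>2) * (\<Sum>i<N. \<Sum>j\<in>{..<N} - {i}. 1 / dist (y i) (y j) powr (3 - \<xi>))
                   \<le> C\<^sub>\<xi>}) \<longlonglongrightarrow> 1)"
  proof (intro allI impI)
    fix \<xi> :: real assume \<xi>: "0 < \<xi> \<and> \<xi> \<le> 1"
    define a where "a = 3 - \<xi>"
    have a: "0 \<le> a" "a < 3" using \<xi> unfolding a_def by auto
    define h where "h z = 1 / dist (fst z) (snd z) powr a" for z :: "(real^3) \<times> (real^3)"
    have hm: "h \<in> borel_measurable (?M \<Otimes>\<^sub>M ?M)" unfolding h_def by (rule mconv) measurable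
    have hpos: "0 \<le> h z" for z unfolding h_def by simp
    define k where "k t = ennreal (indicator {..<1} t * (1 / t powr a))" for t :: real
    have km: "k \<in> borel_measurable borel" unfolding k_def by measurable
    have pw: "ennreal (norm (h z)) \<le> k (dist (fst z) (snd z)) + 1" for z
    proof -
      let ?d = "dist (fst z) (snd z)"
      have "h z \<le> indicator {..<1} ?d * (1 / ?d powr a) + 1"
      proof (cases "?d < 1")
        case True then show ?thesis unfolding h_def by simp
      next
        case False
        then have "1 \<le> ?d powr a" using a by (intro ge_one_powr_ge_zero) auto
        then have "1 / ?d powr a \<le> 1" by (simp add: divide_le_eq_1)
        then show ?thesis using False unfolding h_def by simp
      qed
      then have "ennreal (h z) \<le> ennreal (indicator {..<1} ?d * (1 / ?d powr a) + 1)"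
        by (rule ennreal_leI)
      also have "\<dots> = k ?d + 1" unfolding k_def by (simp add: ennreal_plus)
      finally show ?thesis using hpos[of z] by simp
    qed
    have "(\<integral>\<^sup>+z. ennreal (norm (h z)) \<partial>(?M \<Otimes>\<^sub>M ?M)) \<le> (\<integral>\<^sup>+z. k (dist (fst z) (snd z)) + 1 \<partial>(?M \<Otimes>\<^sub>M ?M))"
      by (rule nn_integral_mono) (rule pw)
    also have "\<dots> = (\<integral>\<^sup>+z. k (dist (fst z) (snd z)) \<partial>(?M \<Otimes>\<^sub>M ?M)) + (\<integral>\<^sup>+z. 1 \<partial>(?M \<Otimes>\<^sub>M ?M))"
      by (rule nn_integral_add) (use km dm in auto)
    also have "(\<integral>\<^sup>+z. 1 \<partial>(?M \<Otimes>\<^sub>M ?M)) = 1"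
      using MM.emeasure_space_1 by simp
    also have "(\<integral>\<^sup>+z. k (dist (fst z) (snd z)) \<partial>(?M \<Otimes>\<^sub>M ?M)) \<le> 2 * (\<integral>\<^sup>+x. ennreal ((W x)\<^sup>2) \<partial>lborel) * (\<integral>\<^sup>+z. k (norm z) \<partial>(lborel :: (real^3) measure))"
      by (rule KB[OF WA km])
    also have "(\<integral>\<^sup>+z. k (norm z) \<partial>(lborel :: (real^3) measure)) < \<infinity>"
      unfolding k_def by (rule sing_int[OF a])
    then obtain s where "(\<integral>\<^sup>+z. k (norm z) \<partial>(lborel :: (real^3) measure)) = ennreal s" by (auto simp: less_top_ennreal)
    finally have fin: "(\<integral>\<^sup>+z. ennreal (norm (h z)) \<partial>(?M \<Otimes>\<^sub>M ?M)) \<le> 2 * ennreal q * ennreal s + 1"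
      unfolding q(1) by (simp add: add_right_mono mult_left_mono)
    have hint: "integrable (?M \<Otimes>\<^sub>M ?M) h"
    proof (rule integrableI_bounded[OF hm])
      show "(\<integral>\<^sup>+z. ennreal (norm (h z)) \<partial>(?M \<Otimes>\<^sub>M ?M)) < \<infinity>"
        by (rule le_less_trans[OF fin]) (simp add: ennreal_mult_less_top)
    qed
    note L = ustat_lim[OF M hm hpos hint]
    show "\<exists>C\<^sub>\<xi>. (\<lambda>N. measure (iid_law W N)
              {y \<in> space (iid_law W N).
                 (1 / (real N)\<^sup>2) * (\<Sum>i<N. \<Sum>j\<in>{..<N} - {i}. 1 / dist (y i) (y j) powr (3 - \<xi>))
                   \<le> C\<^sub>\<xi>}) \<longlonglongrightarrow> 1"
      by (rule exI[of _ "(\<integral>z. h z \<partial>(?M \<Otimes>\<^sub>M ?M)) + 2"]) (use L in \<open>simp add: iid h_def a_def\<close>)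
  qed
  show ?thesis using part1 part2 by blast
qed

end
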